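(* Let $N\ge2$ and let $b(t)$ be the Brownian motion on the spider graph $Sp_N$ with Kirchhoff gluing at the origin, started at the origin. For $L>0$ let $\tau_{L,1}=\min\{t: b(t)\text{ is the point }x_1=L\text{ on leg }l_1\}$ (no condition on the motion along the other legs). Then for every $\lambda>0$, $u(\lambda,L):=E_0e^{-\lambda\tau_{L,1}}$ satisfies $$u(\lambda,L)=\frac{2}{N}e^{-\sqrt{2\lambda}L}+\frac{2}{N}\Big(1-\frac{2}{N}\Big)e^{-3\sqrt{2\lambda}L}+\frac{2}{N}\Big(1-\frac{2}{N}\Big)^2e^{-5\sqrt{2\lambda}L}+\cdots=\sum_{n=0}^\infty\frac{2}{N}\Big(1-\frac{2}{N}\Big)^ne^{-(2n+1)\sqrt{2\lambda}L}.$$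
   Context: The spider graph $Sp_N$ consists of $N$ half-lines (legs) $l_1,\dots,l_N$, each a copy of $[0,\infty)$ with coordinate $x_i\ge0$, glued at their common endpoint $0$. The Brownian motion $b(t)$ on $Sp_N$ is the continuous strong Markov process with generator $\frac12\frac{d^2}{dx_i^2}$ on each leg, acting on functions continuous on $Sp_N$, twice differentiable on each leg, and satisfying Kirchhoff's condition $\sum_{i=1}^N f_i'(0)=0$ ($f_i'(0)$ the one-sided derivative at $0$ along leg $l_i$). Equivalently, away from $0$ it is a standard one-dimensional Brownian motion along the leg and from $0$ it enters each leg with equal probability $1/N$. *)

theory Defs
  imports "HOL-Probability.Probability"
begin

text \<open>The spider graph Sp_N embedded in the complex plane: leg l_(k+1), k < N, is the
ray through cis(2 pi k / N); the point with coordinate x on leg l_(k+1) is spider_pt N k x. The Euclidean topology on this set coincides with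
the graph (path) topology of Sp_N, since there are finitely many legs.\<close>

definition spider_pt :: "nat \<Rightarrow> nat \<Rightarrow> real \<Rightarrow> complex" where
  "spider_pt N k x = complex_of_real x * cis (2 * pi * real k / real N)"

definition spider :: "nat \<Rightarrow> complex set" where
  "spider N = {spider_pt N k x | k x. k < N \<and> 0 \<le> x}"

text \<open>Domain of the generator: f is bounded and continuous on Sp_N, on each leg
x \<mapsto> f(x) is twice continuously differentiable on [0,\<infinity>) (one-sided at 0), the second
derivatives glue to a bounded continuous function h on Sp_N (so that (1/2) h = Gf), and
Kirchhoff's condition sum_i f_i'(0) = 0 holds. The pair (f,h) records f and f''.\<close>

definition spider_gen_dom :: "nat \<Rightarrow> (complex \<Rightarrow> real) \<Rightarrow> (complex \<Rightarrow> real) \<Rightarrow> bool" where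
  "spider_gen_dom N f h \<longleftrightarrow>
     continuous_on (spider N) f \<and> bounded (f ` spider N) \<and>
     continuous_on (spider N) h \<and> bounded (h ` spider N) \<and>
     (\<exists>d :: nat \<Rightarrow> real \<Rightarrow> real.
        (\<forall>k<N. \<forall>x\<ge>0.
           ((\<lambda>y. f (spider_pt N k y)) has_real_derivative d k x) (at x within {0..}) \<and>
           (d k has_real_derivative h (spider_pt N k x)) (at x within {0..})) \<and>
        (\<Sum>k<N. d k 0) = 0)"

definition nat_filt :: "'a measure \<Rightarrow> (real \<Rightarrow> 'a \<Rightarrow> complex) \<Rightarrow> real \<Rightarrow> 'a set set" where
  "nat_filt M b s = sigma_sets (space M)
     {b r -` B \<inter> space M | r B. 0 \<le> r \<and> r \<le> s \<and> B \<in> sets borel}"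

definition is_martingale :: "'a measure \<Rightarrow> (real \<Rightarrow> 'a set set) \<Rightarrow> (real \<Rightarrow> 'a \<Rightarrow> real) \<Rightarrow> bool" where
  "is_martingale M F X \<longleftrightarrow>
     (\<forall>t\<ge>0. integrable M (X t)) \<and>
     (\<forall>s t A. 0 \<le> s \<longrightarrow> s \<le> t \<longrightarrow> A \<in> F s \<longrightarrow>
        (\<integral>\<omega>. (X t \<omega> - X s \<omega>) * indicator A \<omega> \<partial>M) = 0)"

text \<open>Brownian motion on Sp_N (Kirchhoff gluing) started at the origin, characterised
as a solution of the (well-posed) martingale problem for its generator:
b is a process with continuous paths in Sp_N, b 0 = 0, and for every (f, f'') in the
generator domain, f(b t) - f(b 0) - \<integral>_0^t (1/2) f''(b u) du is a martingale with
respect to the natural filtration of b.\<close>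

definition spider_BM :: "nat \<Rightarrow> 'a measure \<Rightarrow> (real \<Rightarrow> 'a \<Rightarrow> complex) \<Rightarrow> bool" where
  "spider_BM N M b \<longleftrightarrow>
     prob_space M \<and>
     (\<forall>t. b t \<in> borel_measurable M) \<and>
     (\<forall>\<omega>\<in>space M. continuous_on {0..} (\<lambda>t. b t \<omega>) \<and> (\<forall>t\<ge>0. b t \<omega> \<in> spider N)) \<and>
     (\<forall>\<omega>\<in>space M. b 0 \<omega> = 0) \<and>
     (\<forall>f h. spider_gen_dom N f h \<longrightarrow>
        is_martingale M (nat_filt M b)
          (\<lambda>t \<omega>. f (b t \<omega>) - f (b 0 \<omega>) - integral {0..t} (\<lambda>u. h (b u \<omega>) / 2)))"

text \<open>E_0 exp(-lambda tau) where tau is the first hitting time of the point x_1 = L on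
leg l_1 (exp(-lambda tau) := 0 on paths that never hit).\<close>

definition hit_laplace :: "'a measure \<Rightarrow> (real \<Rightarrow> 'a \<Rightarrow> complex) \<Rightarrow> real \<Rightarrow> real \<Rightarrow> real" where
  "hit_laplace M b lam L = (\<integral>\<omega>.
     (if \<exists>t\<ge>0. b t \<omega> = complex_of_real L
      then exp (- lam * Inf {t. 0 \<le> t \<and> b t \<omega> = complex_of_real L}) else 0) \<partial>M)"

end

theory Submission
  imports Defs
begin


lemma deriv_piece:
  fixes P E P' E' :: "real \<Rightarrow> real"
  assumes dP: "\<And>x. (P has_real_derivative P' x) (at x)"
    and dE: "\<And>x. (E has_real_derivative E' x) (at x)"
    and eq0: "P L = E L" and eq1: "P' L = E' L"
  shows "((\<lambda>x. if x \<le> L then P x else E x) has_real_derivative (if x \<le> L then P' x else E' x)) (at x)"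
proof -
  define Q where "Q = (\<lambda>x. if x \<le> L then P x else E x)"
  consider "x < L" | "x > L" | "x = L" by linarith
  then have "(Q has_real_derivative (if x \<le> L then P' x else E' x)) (at x)"
  proof cases
    case 1
    have "(Q has_real_derivative P' x) (at x)"
      by (rule has_field_derivative_transform_within_open[OF dP[of x], of "{..<L}"])
         (use 1 in \<open>auto simp: Q_def\<close>)
    then show ?thesis using 1 by simp
  next
    case 2
    have "(Q has_real_derivative E' x) (at x)"
      by (rule has_field_derivative_transform_within_open[OF dE[of x], of "{L<..}"])
         (use 2 in \<open>auto simp: Q_def\<close>)
    then show ?thesis using 2 by simp
  next
    case 3
    have l0: "((\<lambda>y. (P y - P L) / (y - L)) \<longlongrightarrow> P' L) (at_left L)"
      using dP[of L] unfolding has_field_derivative_iff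
      by (rule tendsto_mono[rotated]) (simp add: at_within_le_at)
    have l: "((\<lambda>y. (Q y - Q L) / (y - L)) \<longlongrightarrow> P' L) (at_left L)"
      by (rule tendsto_cong[THEN iffD1, OF _ l0])
         (auto simp: eventually_at_filter Q_def)
    have r0: "((\<lambda>y. (E y - E L) / (y - L)) \<longlongrightarrow> E' L) (at_right L)"
      using dE[of L] unfolding has_field_derivative_iff
      by (rule tendsto_mono[rotated]) (simp add: at_within_le_at)
    have r: "((\<lambda>y. (Q y - Q L) / (y - L)) \<longlongrightarrow> P' L) (at_right L)"
      by (rule tendsto_cong[THEN iffD1, OF _ r0[unfolded eq1[symmetric]]])
         (auto simp: eventually_at_filter Q_def eq0)
    show ?thesis unfolding has_field_derivative_iff using 3 filterlim_split_at[OF l r]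
      by simp
  qed
  then show ?thesis by (simp add: Q_def)
qed

lemma spider_pt0[simp]: "spider_pt N 0 x = complex_of_real x"
  by (simp add: spider_pt_def)

lemma norm_spider_pt[simp]: "x \<ge> 0 \<Longrightarrow> cmod (spider_pt N k x) = x"
  by (simp add: spider_pt_def norm_mult)

lemma legs_sep:
  assumes "0 < k" "k < N" "x > 0"
  shows "\<not> (Im (spider_pt N k x) = 0 \<and> 0 \<le> Re (spider_pt N k x))"
proof
  assume h: "Im (spider_pt N k x) = 0 \<and> 0 \<le> Re (spider_pt N k x)"
  define t where "t = 2 * pi * real k / real N"
  have t0: "0 < t" using assms by (simp add: t_def)
  have t1: "t < 2 * pi" using assms by (simp add: t_def field_simps)
  have s: "sin t = 0" and c: "cos t \<ge> 0" using h assms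
    by (auto simp: spider_pt_def t_def zero_le_mult_iff)
  have s': "sin (t - pi) = 0" using s by (simp add: sin_diff)
  have "- pi < t - pi" "t - pi < pi" using t0 t1 by linarith+
  then have "t - pi = 0" using s' by (rule sin_eq_0_pi)
  then have "cos t = -1" by simp
  with c show False by simp
qed

definition legf :: "(real \<Rightarrow> real) \<Rightarrow> (real \<Rightarrow> real) \<Rightarrow> complex \<Rightarrow> real" where
  "legf F G z = (if Im z = 0 \<and> 0 \<le> Re z then F (Re z) else G (cmod z))"

lemma legf_leg0: "legf F G (spider_pt N 0 x) = (if 0 \<le> x then F x else G (abs x))"
  by (simp add: legf_def)

lemma legf_real: "legf F G (complex_of_real x) = (if 0 \<le> x then F x else G (abs x))"
  by (simp add: legf_def)

lemma legf_legk:
  assumes "0 < k" "k < N" "x \<ge> 0" "F 0 = G 0"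
  shows "legf F G (spider_pt N k x) = G x"
proof (cases "x = 0")
  case True then show ?thesis using assms by (simp add: legf_def spider_pt_def)
next
  case False
  then have "x > 0" using assms by simp
  then show ?thesis unfolding legf_def using assms(3)
    by (subst if_not_P[OF legs_sep[OF assms(1,2) \<open>x > 0\<close>]]) simp
qed

definition leg :: "nat \<Rightarrow> nat \<Rightarrow> complex set" where
  "leg N k = spider_pt N k ` {0..}"

lemma spider_Union: "spider N = (\<Union>k\<in>{..<N}. leg N k)"
  by (auto simp: spider_def leg_def)

lemma leg_eq: "leg N k = {z. Im (z * cnj (cis (2 * pi * real k / real N))) = 0
    \<and> 0 \<le> Re (z * cnj (cis (2 * pi * real k / real N)))}"
proof -
  define c where "c = cis (2 * pi * real k / real N)"
  have cc: "c * cnj c = 1" "cnj c * c = 1"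
    by (simp_all add: c_def cis_cnj cis_mult)
  show ?thesis unfolding c_def[symmetric]
  proof safe
    fix z assume "z \<in> leg N k"
    then obtain x where "x \<ge> 0" "z = of_real x * c" by (auto simp: leg_def spider_pt_def c_def)
    then show "Im (z * cnj c) = 0" "0 \<le> Re (z * cnj c)"
      by (simp_all add: mult.assoc cc)
  next
    fix z assume h: "Im (z * cnj c) = 0" "0 \<le> Re (z * cnj c)"
    have "z * cnj c = of_real (Re (z * cnj c))" using h(1) by (simp add: complex_eq_iff)
    then have "z = of_real (Re (z * cnj c)) * c"
      by (metis cc(2) mult.assoc mult.right_neutral)
    then have "z \<in> (\<lambda>x. complex_of_real x * c) ` {0..}" 
      by (rule rev_image_eqI[rotated]) (use h(2) in simp)
    then show "z \<in> leg N k" unfolding leg_def spider_pt_def c_def .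
  qed
qed

lemma closed_leg: "closed (leg N k)"
  unfolding leg_eq
  by (intro closed_Collect_conj closed_Collect_eq closed_Collect_le continuous_intros)

lemma legf_cont:
  assumes "continuous_on {0..} F" "continuous_on {0..} G" "F 0 = G 0"
  shows "continuous_on (spider N) (legf F G)"
  unfolding spider_Union
proof (rule continuous_on_closed_Union)
  fix k assume k: "k \<in> {..<N}"
  show "continuous_on (leg N k) (legf F G)"
  proof (cases "k = 0")
    case True
    have im: "Re ` leg N k \<subseteq> {0..}" by (auto simp: leg_def True)
    have c1: "continuous_on (leg N k) (\<lambda>z. F (Re z))"
      by (rule continuous_on_compose2[OF assms(1) continuous_on_Re[OF continuous_on_id] im])
    have eq: "\<And>z. z \<in> leg N k \<Longrightarrow> F (Re z) = legf F G z"
      by (auto simp: leg_def True legf_real)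
    show ?thesis using c1 eq by (simp cong: continuous_on_cong)
  next
    case False
    have im: "cmod ` leg N k \<subseteq> {0..}" by auto
    have c1: "continuous_on (leg N k) (\<lambda>z. G (cmod z))"
      by (rule continuous_on_compose2[OF assms(2) continuous_on_norm[OF continuous_on_id] im])
    have eq: "\<And>z. z \<in> leg N k \<Longrightarrow> G (cmod z) = legf F G z"
      using False k assms(3) by (auto simp: leg_def legf_legk)
    show ?thesis using c1 eq by (simp cong: continuous_on_cong)
  qed
qed (auto simp: closed_leg)


lemma legf_bounded:
  assumes "bounded (F ` {0..})" "bounded (G ` {0..})" "F 0 = G 0"
  shows "bounded (legf F G ` spider N)"
proof (rule bounded_subset[OF bounded_Un[THEN iffD2, OF conjI[OF assms(1,2)]]])
  show "legf F G ` spider N \<subseteq> F ` {0..} \<union> G ` {0..}"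
  proof
    fix w assume "w \<in> legf F G ` spider N"
    then obtain k x where kx: "k < N" "0 \<le> x" "w = legf F G (spider_pt N k x)"
      by (auto simp: spider_def)
    show "w \<in> F ` {0..} \<union> G ` {0..}"
    proof (cases "k = 0")
      case True then show ?thesis using kx by (simp add: legf_real)
    next
      case False then show ?thesis using kx assms(3) by (simp add: legf_legk)
    qed
  qed
qed

lemma legf_gen_dom:
  fixes F F1 F2 G G1 G2 :: "real \<Rightarrow> real"
  assumes N: "N \<ge> 1"
  and dF: "\<And>x. x \<ge> 0 \<Longrightarrow> (F has_real_derivative F1 x) (at x within {0..})"
  and dF1: "\<And>x. x \<ge> 0 \<Longrightarrow> (F1 has_real_derivative F2 x) (at x within {0..})"
  and dG: "\<And>x. x \<ge> 0 \<Longrightarrow> (G has_real_derivative G1 x) (at x within {0..})"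
  and dG1: "\<And>x. x \<ge> 0 \<Longrightarrow> (G1 has_real_derivative G2 x) (at x within {0..})"
  and cF2: "continuous_on {0..} F2" and cG2: "continuous_on {0..} G2"
  and e0: "F 0 = G 0" and e2: "F2 0 = G2 0"
  and bF: "bounded (F ` {0..})" and bG: "bounded (G ` {0..})"
  and bF2: "bounded (F2 ` {0..})" and bG2: "bounded (G2 ` {0..})"
  and K: "F1 0 + real (N - 1) * G1 0 = 0"
  shows "spider_gen_dom N (legf F G) (legf F2 G2)"
  unfolding spider_gen_dom_def
proof (intro conjI)
  have cF: "continuous_on {0..} F" by (rule DERIV_continuous_on[OF dF]) simp
  have cG: "continuous_on {0..} G" by (rule DERIV_continuous_on[OF dG]) simp
  show "continuous_on (spider N) (legf F G)" by (rule legf_cont[OF cF cG e0])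
  show "continuous_on (spider N) (legf F2 G2)" by (rule legf_cont[OF cF2 cG2 e2])
  show "bounded (legf F G ` spider N)" by (rule legf_bounded[OF bF bG e0])
  show "bounded (legf F2 G2 ` spider N)" by (rule legf_bounded[OF bF2 bG2 e2])
  define d where "d = (\<lambda>k::nat. if k = 0 then F1 else G1)"
  have D: "\<forall>k<N. \<forall>x\<ge>0.
           ((\<lambda>y. legf F G (spider_pt N k y)) has_real_derivative d k x) (at x within {0..}) \<and>
           (d k has_real_derivative legf F2 G2 (spider_pt N k x)) (at x within {0..})"
  proof (intro allI impI conjI)
    fix k x assume k: "k < N" and x: "(0::real) \<le> x"
    show "((\<lambda>y. legf F G (spider_pt N k y)) has_real_derivative d k x) (at x within {0..})"
    proof (cases "k = 0")
      case True
      have e: "d k x = F1 x" by (simp add: d_def True)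
      show ?thesis unfolding e
        by (rule has_field_derivative_transform_within[OF dF[OF x] zero_less_one])
           (use x True in \<open>auto simp: d_def legf_real\<close>)
    next
      case False
      have e: "d k x = G1 x" by (simp add: d_def False)
      show ?thesis unfolding e
        by (rule has_field_derivative_transform_within[OF dG[OF x] zero_less_one])
           (use x False k e0 in \<open>auto simp: d_def legf_legk\<close>)
    qed
    show "(d k has_real_derivative legf F2 G2 (spider_pt N k x)) (at x within {0..})"
    proof (cases "k = 0")
      case True
      show ?thesis using dF1[OF x] x True by (simp add: d_def legf_real)
    next
      case False
      show ?thesis using dG1[OF x] x False k e2 by (simp add: d_def legf_legk)
    qed
  qed
  have S: "(\<Sum>k<N. d k 0) = 0"
  proof -
    obtain M where M: "N = Suc M" using N by (cases N) auto
    have "(\<Sum>k<N. d k 0) = d 0 0 + (\<Sum>k<M. d (Suc k) 0)"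
      unfolding M by (rule sum.lessThan_Suc_shift)
    also have "\<dots> = F1 0 + real M * G1 0" by (simp add: d_def)
    finally show ?thesis using K M by simp
  qed
  show "\<exists>d. (\<forall>k<N. \<forall>x\<ge>0.
           ((\<lambda>y. legf F G (spider_pt N k y)) has_real_derivative d k x) (at x within {0..}) \<and>
           (d k has_real_derivative legf F2 G2 (spider_pt N k x)) (at x within {0..})) \<and>
        (\<Sum>k<N. d k 0) = 0"
    using D S by blast
qed


locale spsetup =
  fixes N :: nat and lam L :: real
  assumes N2: "N \<ge> 2" and lam: "lam > 0" and Lpos: "L > 0"
begin

definition "s = sqrt (2 * lam)"
definition "Cc = 2 / (real N * exp (s * L) - (real N - 2) * exp (- (s * L)))"
definition "P x = Cc / 2 * (real N * exp (s * x) - (real N - 2) * exp (- (s * x)))"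
definition "P1 x = Cc / 2 * s * (real N * exp (s * x) + (real N - 2) * exp (- (s * x)))"
definition "P2 x = s\<^sup>2 * P x"
definition "Dc = (P1 L + P2 L) / 2"
definition "Bc = - 2 * P1 L - P2 L"
definition "Ac = P L - Bc - Dc"
definition "E x = Ac + Bc * exp (L - x) + Dc * exp (2 * (L - x))"
definition "E1 x = - Bc * exp (L - x) - 2 * Dc * exp (2 * (L - x))"
definition "E2 x = Bc * exp (L - x) + 4 * Dc * exp (2 * (L - x))"
definition "F x = (if x \<le> L then P x else E x)"
definition "F1 x = (if x \<le> L then P1 x else E1 x)"
definition "F2 x = (if x \<le> L then P2 x else E2 x)"
definition "G x = Cc * exp (- (s * x))"
definition "G1 x = - s * Cc * exp (- (s * x))"
definition "G2 x = s\<^sup>2 * G x"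

lemma s_pos: "s > 0" using lam by (simp add: s_def)
lemma s_sq: "s\<^sup>2 = 2 * lam" using lam by (simp add: s_def)

lemma den_pos: "real N * exp (s * L) - (real N - 2) * exp (- (s * L)) > 0"
proof -
  have "exp (- (s * L)) < exp (s * L)" using s_pos Lpos by simp
  moreover have "real N - 2 \<ge> 0" using N2 by simp
  ultimately have "(real N - 2) * exp (- (s * L)) \<le> (real N - 2) * exp (s * L)"
    by (intro mult_left_mono) auto
  moreover have "(real N - 2) * exp (s * L) < real N * exp (s * L)" by simp
  ultimately show ?thesis by linarith
qed

lemma Cc_pos: "Cc > 0" using den_pos by (simp add: Cc_def)

lemma P_L: "P L = 1"
  using den_pos by (simp add: P_def Cc_def)

lemma dP: "(P has_real_derivative P1 x) (at x)"
  unfolding P_def P1_def by (auto intro!: derivative_eq_intros simp: algebra_simps)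
lemma dP1: "(P1 has_real_derivative P2 x) (at x)"
  unfolding P2_def P_def P1_def by (auto intro!: derivative_eq_intros simp: algebra_simps power2_eq_square)
lemma dE: "(E has_real_derivative E1 x) (at x)"
  unfolding E_def E1_def by (auto intro!: derivative_eq_intros simp: algebra_simps)
lemma dE1: "(E1 has_real_derivative E2 x) (at x)"
  unfolding E1_def E2_def by (auto intro!: derivative_eq_intros simp: algebra_simps)
lemma dG: "(G has_real_derivative G1 x) (at x)"
  unfolding G_def G1_def by (auto intro!: derivative_eq_intros simp: algebra_simps)
lemma dG1: "(G1 has_real_derivative G2 x) (at x)"
  unfolding G1_def G2_def G_def by (auto intro!: derivative_eq_intros simp: algebra_simps power2_eq_square)

lemma match0: "P L = E L" by (simp add: E_def Ac_def)
lemma match1: "P1 L = E1 L" by (simp add: E1_def Bc_def Dc_def field_simps)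
lemma match2: "P2 L = E2 L" by (simp add: E2_def Bc_def Dc_def field_simps)

lemma dF: "(F has_real_derivative F1 x) (at x)"
  unfolding F_def[abs_def] F1_def[abs_def] by (rule deriv_piece[OF dP dE match0 match1])
lemma dF1: "(F1 has_real_derivative F2 x) (at x)"
  unfolding F2_def[abs_def] F1_def[abs_def] by (rule deriv_piece[OF dP1 dE1 match1 match2])

lemma cF2: "continuous_on {0..} F2"
proof -
  have c1: "continuous_on {..L} P2" unfolding P2_def P_def by (intro continuous_intros)
  have c2: "continuous_on {L..} E2" unfolding E2_def by (intro continuous_intros)
  have "continuous_on ({..L} \<union> {L..}) F2"
    unfolding F2_def[abs_def]
    by (rule continuous_on_If[OF _ _ c1 c2]) (auto simp: match2)
  then show ?thesis by (rule continuous_on_subset) auto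
qed

lemma cG2: "continuous_on {0..} G2"
  unfolding G2_def G_def by (intro continuous_intros)

lemma e0: "F 0 = G 0" using Lpos by (simp add: F_def G_def P_def algebra_simps)
lemma e2: "F2 0 = G2 0" using Lpos by (simp add: F2_def G2_def P2_def G_def P_def algebra_simps)
lemma K: "F1 0 + real (N - 1) * G1 0 = 0"
  using Lpos N2 by (simp add: F1_def G1_def P1_def field_simps of_nat_diff)

lemma bnd_piece:
  fixes p q :: "real \<Rightarrow> real"
  assumes "continuous_on {0..L} p" "\<And>x. x \<ge> L \<Longrightarrow> \<bar>q x\<bar> \<le> B"
  shows "bounded ((\<lambda>x. if x \<le> L then p x else q x) ` {0..})"
proof -
  have b1: "bounded (p ` {0..L})"
    by (rule compact_imp_bounded[OF compact_continuous_image[OF assms(1) compact_Icc]])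
  have b2: "bounded (q ` {L..})"
    by (rule boundedI) (use assms(2) in auto)
  show ?thesis
    by (rule bounded_subset[OF bounded_Un[THEN iffD2, OF conjI[OF b1 b2]]]) auto
qed

lemma bF: "bounded (F ` {0..})"
  unfolding F_def[abs_def]
proof (rule bnd_piece)
  show "continuous_on {0..L} P" unfolding P_def by (intro continuous_intros)
  fix x assume x: "L \<le> x"
  have "exp (L - x) \<le> 1" "exp (2 * (L - x)) \<le> 1" using x by auto
  then show "\<bar>E x\<bar> \<le> \<bar>Ac\<bar> + \<bar>Bc\<bar> + \<bar>Dc\<bar>" unfolding E_def
    by (auto intro!: order.trans[OF abs_triangle_ineq] add_mono order.trans[OF abs_triangle_ineq]
         simp: abs_mult mult_left_le)
qed

lemma bF2: "bounded (F2 ` {0..})"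
  unfolding F2_def[abs_def]
proof (rule bnd_piece)
  show "continuous_on {0..L} P2" unfolding P2_def P_def by (intro continuous_intros)
  fix x assume x: "L \<le> x"
  have "exp (L - x) \<le> 1" "exp (2 * (L - x)) \<le> 1" using x by auto
  then show "\<bar>E2 x\<bar> \<le> \<bar>Bc\<bar> + 4 * \<bar>Dc\<bar>" unfolding E2_def
    by (auto intro!: order.trans[OF abs_triangle_ineq] add_mono
         simp: abs_mult mult_left_le)
qed

lemma bG: "bounded (G ` {0..})"
proof -
  have "\<forall>x\<in>{0..}. \<bar>G x\<bar> \<le> Cc" using Cc_pos s_pos by (auto simp: G_def abs_mult)
  then show ?thesis unfolding bounded_iff by auto
qed

lemma bG2: "bounded (G2 ` {0..})"
proof -
  have "\<forall>x\<in>{0..}. \<bar>G2 x\<bar> \<le> s\<^sup>2 * Cc" using Cc_pos s_pos by (auto simp: G2_def G_def abs_mult)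
  then show ?thesis unfolding bounded_iff by auto
qed

definition "f = legf F G"
definition "h = legf F2 G2"

lemma gen_dom: "spider_gen_dom N f h"
  unfolding f_def h_def
  by (rule legf_gen_dom[OF _ has_field_derivative_at_within[OF dF] has_field_derivative_at_within[OF dF1]
      has_field_derivative_at_within[OF dG] has_field_derivative_at_within[OF dG1]
      cF2 cG2 e0 e2 bF bG bF2 bG2 K]) (use N2 in simp)

lemma pde: "\<not> (Im z = 0 \<and> Re z > L) \<Longrightarrow> h z / 2 = lam * f z"
  by (auto simp: h_def f_def legf_def F2_def F_def P2_def G2_def s_sq)

lemma f_L: "f (complex_of_real L) = 1"
  using Lpos by (simp add: f_def legf_real F_def P_L)

lemma f_0: "f 0 = Cc"
  using legf_real[of F G 0] less_imp_le[OF Lpos] by (simp add: f_def F_def G_def P_def algebra_simps)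

lemma series: "(\<lambda>n. 2 / real N * (1 - 2 / real N) ^ n * exp (- real (2 * n + 1) * sqrt (2 * lam) * L))
           sums Cc"
proof -
  define a where "a = s * L"
  define q where "q = (1 - 2 / real N) * exp (- 2 * a)"
  have q: "norm q < 1"
  proof -
    have r0: "0 \<le> 1 - 2 / real N" "1 - 2 / real N \<le> 1" using N2 by (auto simp: field_simps)
    have e: "exp (- 2 * a) < 1" "exp (- 2 * a) > 0" using s_pos Lpos by (auto simp: a_def)
    have "norm q = (1 - 2 / real N) * exp (- 2 * a)" using r0 e by (simp add: q_def abs_mult)
    also have "\<dots> \<le> 1 * exp (- 2 * a)" using r0 e by (intro mult_right_mono) auto
    also have "\<dots> < 1" using e by simp
    finally show ?thesis .
  qed
  have eq: "2 / real N * (1 - 2 / real N) ^ n * exp (- real (2 * n + 1) * sqrt (2 * lam) * L)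
      = 2 / real N * exp (- a) * q ^ n" for n
  proof -
    have "exp (- real (2 * n + 1) * sqrt (2 * lam) * L) = exp (- a) * exp (- 2 * a) ^ n"
      by (simp add: a_def s_def exp_of_nat_mult[symmetric] exp_add[symmetric] algebra_simps)
    then show ?thesis by (simp add: q_def power_mult_distrib)
  qed
  have "(\<lambda>n. 2 / real N * exp (- a) * q ^ n) sums (2 / real N * exp (- a) * (1 / (1 - q)))"
    by (intro sums_mult geometric_sums q)
  moreover have "2 / real N * exp (- a) * (1 / (1 - q)) = Cc"
  proof -
    have N0: "real N > 0" using N2 by simp
    define x where "x = exp (- a)"
    define y where "y = exp a"
    define d where "d = real N * y - (real N - 2) * x"
    have x0: "x > 0" by (simp add: x_def)
    have e2: "exp (- 2 * a) = x * x" by (simp add: x_def exp_add[symmetric])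
    have ea: "y * x = 1" by (simp add: x_def y_def exp_add[symmetric])
    have d: "d > 0" using den_pos by (simp add: a_def d_def x_def y_def)
    have h1: "1 - q = x * d / real N"
    proof -
      have "1 - q = (real N * (y * x) - (real N - 2) * (x * x)) / real N"
        unfolding q_def e2 ea using N0 by (simp add: field_simps)
      also have "\<dots> = x * d / real N" by (simp add: d_def algebra_simps)
      finally show ?thesis .
    qed
    have "2 / real N * exp (- a) * (1 / (1 - q)) = 2 / real N * x * (real N / (x * d))"
      unfolding h1 x_def by simp
    also have "\<dots> = 2 / d" using N0 x0 d by (simp add: field_simps)
    also have "\<dots> = Cc" by (simp add: Cc_def d_def x_def y_def a_def)
    finally show ?thesis .
  qed
  ultimately show ?thesis unfolding eq by simp
qed

end


lemma int_bound:
  fixes g :: "real \<Rightarrow> real"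
  assumes "a \<le> b" "continuous_on {a..b} g" "\<And>x. x \<in> {a..b} \<Longrightarrow> \<bar>g x\<bar> \<le> B"
  shows "\<bar>integral {a..b} g\<bar> \<le> B * (b - a)"
proof -
  have B: "0 \<le> B" using assms(3)[of a] assms(1) by auto
  have "(g has_integral integral {a..b} g) (cbox a b)"
    using integrable_integral[OF integrable_continuous_real[OF assms(2)]] by simp
  from has_integral_bound[OF B this] assms show ?thesis by (simp add: content_real)
qed

definition tt :: "real \<Rightarrow> nat \<Rightarrow> nat \<Rightarrow> real" where
  "tt T n j = T * real j / real n"

definition trm :: "real \<Rightarrow> (real \<Rightarrow> real) \<Rightarrow> (real \<Rightarrow> real) \<Rightarrow> real \<Rightarrow> real \<Rightarrow> real" where
  "trm lam p q a c = exp (- lam * c) * (integral {0..c} q - integral {0..a} q)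
      + (exp (- lam * c) - exp (- lam * a)) * p a"

lemma trm_bound1:
  fixes p q :: "real \<Rightarrow> real"
  assumes "0 \<le> a" "a \<le> c" "c \<le> T" "lam > 0"
    and cq: "continuous_on {0..T} q"
    and bp: "\<And>u. u \<in> {0..T} \<Longrightarrow> \<bar>p u\<bar> \<le> Fb" and bq: "\<And>u. u \<in> {0..T} \<Longrightarrow> \<bar>q u\<bar> \<le> Qb"
  shows "\<bar>trm lam p q a c\<bar> \<le> (c - a) * (Qb + lam * Fb)"
proof -
  have qi: "q integrable_on {0..c}"
    by (rule integrable_continuous_real, rule continuous_on_subset[OF cq]) (use assms in auto)
  have I: "integral {0..c} q - integral {0..a} q = integral {a..c} q"
    using Henstock_Kurzweil_Integration.integral_combine[OF assms(1,2) qi] by simp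
  have Ib: "\<bar>integral {a..c} q\<bar> \<le> Qb * (c - a)"
    by (rule int_bound) (use assms in \<open>auto intro: continuous_on_subset[OF cq]\<close>)
  have e1: "exp (- lam * c) \<le> 1" "exp (- lam * c) > 0" using assms by auto
  have t1: "\<bar>exp (- lam * c) * integral {a..c} q\<bar> \<le> 1 * (Qb * (c - a))"
    unfolding abs_mult using e1 Ib by (intro mult_mono) auto
  have d0: "0 \<le> exp (- lam * a) - exp (- lam * c)" using assms by auto
  have "exp (- lam * a) - exp (- lam * c) = exp (- lam * a) * (1 - exp (- (lam * (c - a))))"
    by (simp add: algebra_simps exp_add[symmetric])
  also have "\<dots> \<le> 1 * (lam * (c - a))"
    using assms exp_ge_add_one_self[of "- (lam * (c - a))"]
    by (intro mult_mono) auto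
  finally have d1: "exp (- lam * a) - exp (- lam * c) \<le> lam * (c - a)" by simp
  have t2: "\<bar>(exp (- lam * c) - exp (- lam * a)) * p a\<bar> \<le> (lam * (c - a)) * Fb"
    unfolding abs_mult using d0 d1 bp[of a] assms by (intro mult_mono) auto
  have "\<bar>trm lam p q a c\<bar> \<le> 1 * (Qb * (c - a)) + (lam * (c - a)) * Fb"
    unfolding trm_def I by (rule order.trans[OF abs_triangle_ineq add_mono[OF t1 t2]])
  moreover have "1 * (Qb * (c - a)) + (lam * (c - a)) * Fb = (c - a) * (Qb + lam * Fb)"
    by algebra
  ultimately show ?thesis by linarith
qed

lemma trm_bound2:
  fixes p q :: "real \<Rightarrow> real"
  assumes "0 \<le> a" "a \<le> c" "c \<le> T" "lam > 0" "lam * (c - a) \<le> 1"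
    and cp: "continuous_on {0..T} p" and cq: "continuous_on {0..T} q"
    and pde: "\<And>u. u \<in> {a..c} \<Longrightarrow> q u = lam * p u"
    and bp: "\<And>u. u \<in> {0..T} \<Longrightarrow> \<bar>p u\<bar> \<le> Fb"
    and osc: "\<And>u. u \<in> {a..c} \<Longrightarrow> \<bar>p u - p a\<bar> \<le> e"
  shows "\<bar>trm lam p q a c\<bar> \<le> lam * (c - a) * e + Fb * (lam * (c - a))\<^sup>2"
proof -
  define dl where "dl = c - a"
  have cpc: "continuous_on {a..c} p" by (rule continuous_on_subset[OF cp]) (use assms in auto)
  have qi: "q integrable_on {0..c}"
    by (rule integrable_continuous_real, rule continuous_on_subset[OF cq]) (use assms in auto)
  have I: "integral {0..c} q - integral {0..a} q = integral {a..c} q"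
    using Henstock_Kurzweil_Integration.integral_combine[OF assms(1,2) qi] by simp
  have pi: "p integrable_on {a..c}" by (rule integrable_continuous_real[OF cpc])
  have I2: "integral {a..c} q = lam * (integral {a..c} (\<lambda>u. p u - p a) + (c - a) * p a)"
  proof -
    have "integral {a..c} q = integral {a..c} (\<lambda>u. lam * p u)" by (rule integral_cong) (rule pde)
    also have "\<dots> = lam * integral {a..c} p" by (rule integral_mult_right)
    also have "integral {a..c} p = integral {a..c} (\<lambda>u. p u - p a) + (c - a) * p a"
      using integral_diff[OF pi integrable_const_ivl[of "p a" a c]] assms by (simp add: content_real)
    finally show ?thesis .
  qed
  have Ib: "\<bar>integral {a..c} (\<lambda>u. p u - p a)\<bar> \<le> e * (c - a)"
    by (rule int_bound) (use assms cpc in \<open>auto intro: continuous_intros\<close>)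
  have e1: "exp (- lam * c) \<le> 1" "exp (- lam * c) > 0" using assms by auto
  have ea: "exp (- lam * a) = exp (- lam * c) * exp (lam * (c - a))"
    by (simp add: exp_add[symmetric] algebra_simps)
  define x where "x = lam * (c - a)"
  have x: "0 \<le> x" "x \<le> 1" using assms by (auto simp: x_def)
  have ex: "0 \<le> exp x - 1 - x" "exp x - 1 - x \<le> x\<^sup>2"
    using exp_ge_add_one_self[of x] exp_bound[OF x] by linarith+
  have eq: "trm lam p q a c = exp (- lam * c) * lam * integral {a..c} (\<lambda>u. p u - p a)
      - exp (- lam * c) * (exp x - 1 - x) * p a"
    unfolding trm_def I I2 ea x_def by algebra
  have t1: "\<bar>exp (- lam * c) * lam * integral {a..c} (\<lambda>u. p u - p a)\<bar> \<le> 1 * lam * (e * (c - a))"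
    unfolding abs_mult using e1 Ib assms by (intro mult_mono) auto
  have t2: "\<bar>exp (- lam * c) * (exp x - 1 - x) * p a\<bar> \<le> 1 * x\<^sup>2 * Fb"
    unfolding abs_mult using e1 ex bp[of a] assms by (intro mult_mono) auto
  have "\<bar>trm lam p q a c\<bar> \<le> 1 * lam * (e * (c - a)) + 1 * x\<^sup>2 * Fb"
    unfolding eq by (rule order.trans[OF abs_triangle_ineq4 add_mono[OF t1 t2]])
  moreover have "1 * lam * (e * (c - a)) + 1 * x\<^sup>2 * Fb = lam * (c - a) * e + Fb * (lam * (c - a))\<^sup>2"
    unfolding x_def by algebra
  ultimately show ?thesis by linarith
qed


definition Phi :: "real \<Rightarrow> real \<Rightarrow> real \<Rightarrow> (real \<Rightarrow> real) \<Rightarrow> (real \<Rightarrow> real) \<Rightarrow> nat \<Rightarrow> real" where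
  "Phi T lam sig p q n = (\<Sum>j<n. if tt T n j < sig then trm lam p q (tt T n j) (tt T n (Suc j)) else 0)"

lemma tt_diff: "n \<ge> 1 \<Longrightarrow> tt T n (Suc j) - tt T n j = T / real n"
  by (simp add: tt_def field_simps)

lemma tt_nonneg: "T \<ge> 0 \<Longrightarrow> tt T n j \<ge> 0"
  by (simp add: tt_def)

lemma tt_le: "T \<ge> 0 \<Longrightarrow> j \<le> n \<Longrightarrow> tt T n j \<le> T"
proof (cases "n = 0")
  case False
  assume "T \<ge> 0" "j \<le> n"
  then have "T * real j \<le> T * real n" by (intro mult_left_mono) auto
  then show ?thesis using False by (simp add: tt_def field_simps)
qed (simp add: tt_def)

lemma tt_mono: "T \<ge> 0 \<Longrightarrow> j \<le> k \<Longrightarrow> tt T n j \<le> tt T n k"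
  by (simp add: tt_def divide_right_mono mult_left_mono)

lemma Phi_bound:
  fixes p q :: "real \<Rightarrow> real"
  assumes T: "T > 0" and lam: "lam > 0"
    and cq: "continuous_on {0..T} q"
    and bp: "\<And>u. u \<in> {0..T} \<Longrightarrow> \<bar>p u\<bar> \<le> Fb" and bq: "\<And>u. u \<in> {0..T} \<Longrightarrow> \<bar>q u\<bar> \<le> Qb"
  shows "\<bar>Phi T lam sig p q n\<bar> \<le> T * (Qb + lam * Fb)"
proof (cases "n = 0")
  case True
  have "0 \<le> Fb" "0 \<le> Qb" using bp[of 0] bq[of 0] T by auto
  then show ?thesis using True T lam by (simp add: Phi_def)
next
  case False
  then have n: "n \<ge> 1" by simp
  have "\<bar>Phi T lam sig p q n\<bar> \<le> (\<Sum>j<n. \<bar>if tt T n j < sig then trm lam p q (tt T n j) (tt T n (Suc j)) else 0\<bar>)"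
    unfolding Phi_def by (rule sum_abs)
  also have "\<dots> \<le> (\<Sum>j<n. T / real n * (Qb + lam * Fb))"
  proof (rule sum_mono)
    fix j assume j: "j \<in> {..<n}"
    have "0 \<le> Fb" "0 \<le> Qb" using bp[of 0] bq[of 0] T by auto
    then have z: "0 \<le> T / real n * (Qb + lam * Fb)" using T lam by auto
    have "\<bar>trm lam p q (tt T n j) (tt T n (Suc j))\<bar> \<le> (tt T n (Suc j) - tt T n j) * (Qb + lam * Fb)"
      by (rule trm_bound1[OF tt_nonneg tt_mono tt_le lam cq bp bq]) (use T j in auto)
    then show "\<bar>if tt T n j < sig then trm lam p q (tt T n j) (tt T n (Suc j)) else 0\<bar> \<le> T / real n * (Qb + lam * Fb)"
      using z tt_diff[OF n] by auto
  qed
  also have "\<dots> = T * (Qb + lam * Fb)" using n by simp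
  finally show ?thesis .
qed

lemma Phi_lim:
  fixes p q :: "real \<Rightarrow> real"
  assumes T: "T > 0" and lam: "lam > 0"
    and cp: "continuous_on {0..T} p" and cq: "continuous_on {0..T} q"
    and sig: "0 \<le> sig" "sig \<le> T"
    and pde: "\<And>u. u \<in> {0..sig} \<Longrightarrow> q u = lam * p u"
    and bp: "\<And>u. u \<in> {0..T} \<Longrightarrow> \<bar>p u\<bar> \<le> Fb" and bq: "\<And>u. u \<in> {0..T} \<Longrightarrow> \<bar>q u\<bar> \<le> Qb"
  shows "(\<lambda>n. Phi T lam sig p q n) \<longlonglongrightarrow> 0"
proof (rule LIMSEQ_I)
  fix e :: real assume e: "e > 0"
  have Fb0: "0 \<le> Fb" and Qb0: "0 \<le> Qb" using bp[of 0] bq[of 0] T by auto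
  define e' where "e' = e / (3 * (T * lam + 1))"
  have e'0: "e' > 0" unfolding e'_def using e mult_pos_pos[OF T lam] by (intro divide_pos_pos) auto
  have "uniformly_continuous_on {0..T} p" by (rule compact_uniformly_continuous[OF cp compact_Icc])
  then obtain d where d: "d > 0" and dd: "\<And>x x'. x \<in> {0..T} \<Longrightarrow> x' \<in> {0..T} \<Longrightarrow> dist x' x < d \<Longrightarrow> dist (p x') (p x) < e'"
    unfolding uniformly_continuous_on_def using e'0 by metis
  define K1 where "K1 = Fb * lam\<^sup>2 * T"
  define K2 where "K2 = Qb + lam * Fb"
  have K1: "K1 \<ge> 0" and K2: "K2 \<ge> 0" using Fb0 Qb0 T lam by (auto simp: K1_def K2_def)
  define c0 where "c0 = min d (min (1 / lam) (min (e / (3 * (K1 + 1))) (e / (3 * (K2 + 1)))))"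
  have c0: "c0 > 0" using d lam e K1 K2 by (simp add: c0_def)
  have "\<forall>\<^sub>F n in sequentially. T / real n < c0"
    by (rule order_tendstoD(2)[OF lim_const_over_n c0])
  moreover have "\<forall>\<^sub>F n in sequentially. n \<ge> 1" by (rule eventually_ge_at_top)
  ultimately have "\<forall>\<^sub>F n in sequentially. T / real n < c0 \<and> n \<ge> 1" by (rule eventually_conj)
  then obtain no where no: "\<And>n. n \<ge> no \<Longrightarrow> T / real n < c0 \<and> n \<ge> 1"
    unfolding eventually_sequentially by blast
  show "\<exists>no. \<forall>n\<ge>no. norm (Phi T lam sig p q n - 0) < e"
  proof (intro exI allI impI)
    fix n assume "no \<le> n"
    with no have dl: "T / real n < c0" and n: "n \<ge> 1" by auto
    define dt where "dt = T / real n"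
    have dt0: "dt > 0" using T n by (simp add: dt_def)
    have dc: "dt < c0" using dl by (simp add: dt_def)
    have dtd: "dt < d" and dtl': "dt < 1 / lam" and dt1: "dt < e / (3 * (K1 + 1))" and dt2: "dt < e / (3 * (K2 + 1))"
      using dc unfolding c0_def by linarith+
    have dtl: "lam * dt \<le> 1" using dtl' lam by (simp add: field_simps)
    define A where "A = lam * dt * e' + Fb * (lam * dt)\<^sup>2"
    define B where "B = dt * K2"
    have A0: "A \<ge> 0" using lam dt0 e'0 Fb0 by (simp add: A_def)
    have B0: "B \<ge> 0" using dt0 K2 by (simp add: B_def)
    define bad where "bad = (\<lambda>j. tt T n j < sig \<and> sig < tt T n (Suc j))"
    have tj: "\<bar>if tt T n j < sig then trm lam p q (tt T n j) (tt T n (Suc j)) else 0\<bar>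
        \<le> A + (if bad j then B else 0)" if j: "j < n" for j
    proof -
      define a where "a = tt T n j"
      define c where "c = tt T n (Suc j)"
      have ca: "c - a = dt" using tt_diff[OF n] by (simp add: a_def c_def dt_def)
      have a0: "0 \<le> a" and ac: "a \<le> c" and cT: "c \<le> T"
        using tt_nonneg[of T] tt_mono[of T] tt_le[of T] T j by (auto simp: a_def c_def)
      consider "\<not> a < sig" | "a < sig" "c \<le> sig" | "a < sig" "sig < c" by linarith
      then show ?thesis
      proof cases
        case 1 then show ?thesis using A0 B0 by (simp add: a_def)
      next
        case 2
        have "\<bar>trm lam p q a c\<bar> \<le> lam * (c - a) * e' + Fb * (lam * (c - a))\<^sup>2"
        proof (rule trm_bound2[OF a0 ac cT lam _ cp cq _ bp])
          show "lam * (c - a) \<le> 1" using ca dtl by simp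
          show "q u = lam * p u" if "u \<in> {a..c}" for u using that 2 a0 by (intro pde) auto
          show "\<bar>p u - p a\<bar> \<le> e'" if u: "u \<in> {a..c}" for u
          proof -
            have "dist u a < d" using u ca dtd by (auto simp: dist_real_def)
            then have "dist (p u) (p a) < e'" using u a0 cT by (intro dd) auto
            then show ?thesis by (simp add: dist_real_def)
          qed
        qed
        then show ?thesis using 2 B0 ca by (simp add: a_def c_def A_def)
      next
        case 3
        have "\<bar>trm lam p q a c\<bar> \<le> (c - a) * (Qb + lam * Fb)"
          by (rule trm_bound1[OF a0 ac cT lam cq bp bq])
        then show ?thesis using 3 A0 ca by (simp add: a_def c_def B_def K2_def bad_def)
      qed
    qed
    have card: "card {j \<in> {..<n}. bad j} \<le> 1"
    proof -
      have "{j \<in> {..<n}. bad j} \<subseteq> {nat \<lfloor>sig * real n / T\<rfloor>}"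
      proof
        fix j assume "j \<in> {j \<in> {..<n}. bad j}"
        then have b: "T * real j / real n < sig" "sig < T * (1 + real j) / real n"
          by (auto simp: bad_def tt_def)
        have "real j < sig * real n / T" "sig * real n / T < real j + 1"
          using b T n by (auto simp: field_simps)
        then have "\<lfloor>sig * real n / T\<rfloor> = int j" by (intro floor_unique) auto
        then show "j \<in> {nat \<lfloor>sig * real n / T\<rfloor>}" by simp
      qed
      from card_mono[OF _ this] show ?thesis by simp
    qed
    have "\<bar>Phi T lam sig p q n\<bar> \<le> (\<Sum>j<n. A + (if bad j then B else 0))"
      unfolding Phi_def by (rule order.trans[OF sum_abs sum_mono]) (use tj in auto)
    also have "\<dots> = real n * A + (\<Sum>j<n. if bad j then B else 0)"
      by (simp add: sum.distrib)
    also have "(\<Sum>j<n. if bad j then B else 0) = real (card {j \<in> {..<n}. bad j}) * B"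
      by (simp add: sum.inter_filter[symmetric])
    also have "\<dots> \<le> 1 * B" using card B0 by (intro mult_right_mono) auto
    finally have bnd: "\<bar>Phi T lam sig p q n\<bar> \<le> real n * A + B" by simp
    have "real n * A = T * lam * e' + K1 * dt"
      using n by (simp add: A_def K1_def dt_def power2_eq_square field_simps)
    moreover have "T * lam * e' < e / 3"
    proof -
      define y where "y = T * lam"
      have y: "y > 0" using T lam by (simp add: y_def)
      have "T * lam * e' = e / 3 * (y / (y + 1))" by (simp add: e'_def y_def)
      also have "\<dots> < e / 3 * 1" using y e by (intro mult_strict_left_mono) auto
      finally show ?thesis by simp
    qed
    moreover have "K1 * dt \<le> e / 3"
    proof -
      have "K1 * dt \<le> (K1 + 1) * (e / (3 * (K1 + 1)))" using K1 dt1 dt0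
        by (intro mult_mono) auto
      moreover have "(K1 + 1) * (e / (3 * (K1 + 1))) = e / 3" using K1 by (simp add: field_simps)
      ultimately show ?thesis by linarith
    qed
    moreover have "B < e / 3"
    proof -
      have "B \<le> (K2 + 1) * dt" using dt0 by (simp add: B_def field_simps)
      also have "\<dots> < (K2 + 1) * (e / (3 * (K2 + 1)))" using K2 dt2 by (intro mult_strict_left_mono) auto
      moreover have "(K2 + 1) * (e / (3 * (K2 + 1))) = e / 3" using K2 by (simp add: field_simps)
      ultimately show ?thesis by linarith
    qed
    ultimately show "norm (Phi T lam sig p q n - 0) < e" using bnd by simp
  qed
qed


definition Ysum :: "real \<Rightarrow> real \<Rightarrow> real \<Rightarrow> (real \<Rightarrow> real) \<Rightarrow> nat \<Rightarrow> real" where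
  "Ysum T lam sig p n = p 0 + (\<Sum>j<n. if tt T n j < sig
     then exp (- lam * tt T n (Suc j)) * p (tt T n (Suc j)) - exp (- lam * tt T n j) * p (tt T n j) else 0)"

lemma Ysum_eq:
  fixes p :: "real \<Rightarrow> real"
  assumes T: "T > 0" and n: "n \<ge> 1" and sig: "0 \<le> sig" "sig \<le> T"
  shows "\<exists>u. sig \<le> u \<and> u \<le> T \<and> u \<le> sig + T / real n \<and> Ysum T lam sig p n = exp (- lam * u) * p u"
proof -
  define m where "m = nat \<lceil>sig * real n / T\<rceil>"
  define Z where "Z = (\<lambda>j. exp (- lam * tt T n j) * p (tt T n j))"
  have "0 \<le> sig * real n / T" using sig T by simp
  then have c0: "\<lceil>sig * real n / T\<rceil> \<ge> 0" by simp
  have rm: "real m = of_int \<lceil>sig * real n / T\<rceil>" unfolding m_def using c0 by simp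
  have mle: "sig * real n / T \<le> real m" unfolding rm by (rule le_of_int_ceiling)
  have mlt: "real m < sig * real n / T + 1" unfolding rm
    using ceiling_correct[of "sig * real n / T"] by linarith
  have mn: "m \<le> n"
  proof -
    have "sig * real n \<le> real n * T" using sig mult_right_mono[of sig T "real n"] by (simp add: mult.commute)
    then have "sig * real n / T \<le> real n" using T by (simp add: pos_divide_le_eq)
    then have "\<lceil>sig * real n / T\<rceil> \<le> int n" by (simp add: ceiling_le_iff)
    from nat_mono[OF this] show ?thesis unfolding m_def by simp
  qed
  have iff: "tt T n j < sig \<longleftrightarrow> j < m" for j
  proof -
    have "tt T n j < sig \<longleftrightarrow> real j < sig * real n / T"
      using T n by (simp add: tt_def field_simps)
    also have "\<dots> \<longleftrightarrow> int j < \<lceil>sig * real n / T\<rceil>" by (simp add: less_ceiling_iff)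
    also have "\<dots> \<longleftrightarrow> j < m" by (simp add: m_def zless_nat_eq_int_zless)
    finally show ?thesis .
  qed
  have "(\<Sum>j<n. if tt T n j < sig then Z (Suc j) - Z j else 0) = (\<Sum>j<n. if j < m then Z (Suc j) - Z j else 0)"
    by (simp add: iff)
  also have "\<dots> = (\<Sum>j\<in>{x \<in> {..<n}. x < m}. Z (Suc j) - Z j)"
    by (rule sum.inter_filter[symmetric]) simp
  also have "{x \<in> {..<n}. x < m} = {..<m}" using mn by auto
  also have "(\<Sum>j<m. Z (Suc j) - Z j) = Z m - Z 0" by (rule sum_lessThan_telescope)
  finally have S: "(\<Sum>j<n. if tt T n j < sig then Z (Suc j) - Z j else 0) = Z m - Z 0" .
  have Z0: "Z 0 = p 0" by (simp add: Z_def tt_def)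
  have "Ysum T lam sig p n = p 0 + (\<Sum>j<n. if tt T n j < sig then Z (Suc j) - Z j else 0)"
    unfolding Ysum_def Z_def by simp
  then have "Ysum T lam sig p n = Z m" using S Z0 by simp
  moreover have "sig \<le> tt T n m" using mle T n by (simp add: tt_def field_simps)
  moreover have "tt T n m \<le> T" using tt_le[OF _ mn] T by simp
  moreover have "tt T n m \<le> sig + T / real n"
  proof -
    have "real m * T / real n \<le> (sig * real n / T + 1) * T / real n"
      using mlt T n by (intro divide_right_mono mult_right_mono) auto
    also have "\<dots> = sig + T / real n" using T n by (simp add: field_simps)
    finally show ?thesis by (simp add: tt_def mult.commute)
  qed
  ultimately show ?thesis unfolding Z_def by blast
qed

lemma Ysum_bound:
  fixes p :: "real \<Rightarrow> real"
  assumes T: "T > 0" and lam: "lam > 0" and sig: "0 \<le> sig" "sig \<le> T"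
    and bp: "\<And>u. u \<in> {0..T} \<Longrightarrow> \<bar>p u\<bar> \<le> Fb"
  shows "\<bar>Ysum T lam sig p n\<bar> \<le> Fb"
proof (cases "n = 0")
  case True then show ?thesis using bp[of 0] T by (simp add: Ysum_def)
next
  case False
  then obtain u where u: "sig \<le> u" "u \<le> T" "Ysum T lam sig p n = exp (- lam * u) * p u"
    using Ysum_eq[OF T _ sig, of n lam p] by auto
  have "\<bar>exp (- lam * u) * p u\<bar> \<le> 1 * Fb"
    unfolding abs_mult using u sig lam bp[of u] by (intro mult_mono) auto
  then show ?thesis using u by simp
qed

lemma Ysum_lim:
  fixes p :: "real \<Rightarrow> real"
  assumes T: "T > 0" and sig: "0 \<le> sig" "sig \<le> T" and cp: "continuous_on {0..T} p"
  shows "(\<lambda>n. Ysum T lam sig p n) \<longlonglongrightarrow> exp (- lam * sig) * p sig"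
proof -
  define u where "u = (\<lambda>n. SOME u. sig \<le> u \<and> u \<le> T \<and> u \<le> sig + T / real n \<and> Ysum T lam sig p n = exp (- lam * u) * p u)"
  have u: "sig \<le> u n \<and> u n \<le> T \<and> u n \<le> sig + T / real n \<and> Ysum T lam sig p n = exp (- lam * u n) * p (u n)"
    if "n \<ge> 1" for n
    unfolding u_def by (rule someI_ex[OF Ysum_eq[OF T that sig]])
  have ev: "\<forall>\<^sub>F n in sequentially. n \<ge> 1" by (rule eventually_ge_at_top)
  have ul: "u \<longlonglongrightarrow> sig"
  proof (rule tendsto_sandwich[of "\<lambda>n. sig" _ _ "\<lambda>n. sig + T / real n"])
    show "\<forall>\<^sub>F n in sequentially. sig \<le> u n" using ev by eventually_elim (use u in auto)
    show "\<forall>\<^sub>F n in sequentially. u n \<le> sig + T / real n" using ev by eventually_elim (use u in auto)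
    show "(\<lambda>n. sig) \<longlonglongrightarrow> sig" by simp
    show "(\<lambda>n. sig + T / real n) \<longlonglongrightarrow> sig"
      using tendsto_add[OF tendsto_const[of sig] lim_const_over_n[of T]] by simp
  qed
  have cZ: "continuous_on {0..T} (\<lambda>x. exp (- lam * x) * p x)" by (intro continuous_intros cp)
  have "((\<lambda>n. exp (- lam * u n) * p (u n)) \<longlongrightarrow> exp (- lam * sig) * p sig) sequentially"
  proof (rule continuous_on_tendsto_compose[OF cZ ul])
    show "sig \<in> {0..T}" using sig by simp
    show "\<forall>\<^sub>F n in sequentially. u n \<in> {0..T}" using ev
    proof eventually_elim
      case (elim n) then show ?case using u[of n] sig by auto
    qed
  qed
  then show ?thesis
  proof (rule Lim_transform_eventually)
    show "\<forall>\<^sub>F n in sequentially. exp (- lam * u n) * p (u n) = Ysum T lam sig p n" using ev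
    proof eventually_elim
      case (elim n) then show ?case using u[of n] by auto
    qed
  qed
qed


locale spBM = spsetup +
  fixes M :: "'a measure" and b :: "real \<Rightarrow> 'a \<Rightarrow> complex"
  assumes BM: "spider_BM N M b"
begin

lemma PS: "prob_space M" using BM by (simp add: spider_BM_def)
lemma bmeas[measurable]: "b t \<in> borel_measurable M" using BM by (simp add: spider_BM_def)
lemma bcont: "\<omega> \<in> space M \<Longrightarrow> continuous_on {0..} (\<lambda>t. b t \<omega>)" using BM by (simp add: spider_BM_def)
lemma bS: "\<omega> \<in> space M \<Longrightarrow> t \<ge> 0 \<Longrightarrow> b t \<omega> \<in> spider N" using BM by (simp add: spider_BM_def)
lemma b0: "\<omega> \<in> space M \<Longrightarrow> b 0 \<omega> = 0" using BM by (simp add: spider_BM_def)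

definition "Xp t \<omega> = f (b t \<omega>) - f (b 0 \<omega>) - integral {0..t} (\<lambda>u. h (b u \<omega>) / 2)"

lemma mart: "is_martingale M (nat_filt M b) Xp"
  using BM gen_dom unfolding spider_BM_def Xp_def[abs_def] by blast

lemma Xint: "t \<ge> 0 \<Longrightarrow> integrable M (Xp t)"
  using mart by (simp add: is_martingale_def)

lemma Xmart: "0 \<le> a \<Longrightarrow> a \<le> t \<Longrightarrow> A \<in> nat_filt M b a \<Longrightarrow>
    (\<integral>\<omega>. (Xp t \<omega> - Xp a \<omega>) * indicator A \<omega> \<partial>M) = 0"
  using mart by (simp add: is_martingale_def)

lemma filt_sets: "nat_filt M b t \<subseteq> sets M"
  unfolding nat_filt_def by (rule sets.sigma_sets_subset) auto

lemma meas_comp: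
  assumes "continuous_on (spider N) g" "t \<ge> 0"
  shows "(\<lambda>\<omega>. g (b t \<omega>)) \<in> borel_measurable M"
proof -
  have "b t \<in> measurable M (restrict_space borel (spider N))"
    by (rule measurable_restrict_space2) (use assms(2) bS in auto)
  then show ?thesis by (rule measurable_compose[OF _ borel_measurable_continuous_on_restrict[OF assms(1)]])
qed

lemma f_cont: "continuous_on (spider N) f" and h_cont: "continuous_on (spider N) h"
  and f_bdd: "bounded (f ` spider N)" and h_bdd: "bounded (h ` spider N)"
  using gen_dom by (simp_all add: spider_gen_dom_def)

definition "Fb = (SOME B. \<forall>z\<in>spider N. \<bar>f z\<bar> \<le> B)"
definition "Qb = (SOME B. \<forall>z\<in>spider N. \<bar>h z / 2\<bar> \<le> B)"

lemma Fb: "z \<in> spider N \<Longrightarrow> \<bar>f z\<bar> \<le> Fb"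
proof -
  obtain B where "\<forall>x\<in>f ` spider N. norm x \<le> B" using f_bdd unfolding bounded_iff by blast
  then have "\<exists>B. \<forall>z\<in>spider N. \<bar>f z\<bar> \<le> B" by auto
  from someI_ex[OF this] show "z \<in> spider N \<Longrightarrow> \<bar>f z\<bar> \<le> Fb" unfolding Fb_def by blast
qed

lemma Qb: "z \<in> spider N \<Longrightarrow> \<bar>h z / 2\<bar> \<le> Qb"
proof -
  obtain B where "\<forall>x\<in>h ` spider N. norm x \<le> B" using h_bdd unfolding bounded_iff by blast
  then have "\<exists>B. \<forall>z\<in>spider N. \<bar>h z / 2\<bar> \<le> B" by (intro exI[of _ "B / 2"]) auto
  from someI_ex[OF this] show "z \<in> spider N \<Longrightarrow> \<bar>h z / 2\<bar> \<le> Qb" unfolding Qb_def by blast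
qed

abbreviation "Lc \<equiv> complex_of_real L"

definition "hit \<omega> = (\<exists>t\<ge>0. b t \<omega> = Lc)"
definition "tau \<omega> = Inf {t. 0 \<le> t \<and> b t \<omega> = Lc}"

lemma tau:
  assumes \<omega>: "\<omega> \<in> space M" and hit: "hit \<omega>"
  shows "0 < tau \<omega>" "b (tau \<omega>) \<omega> = Lc" "\<And>r. 0 \<le> r \<Longrightarrow> r < tau \<omega> \<Longrightarrow> b r \<omega> \<noteq> Lc"
proof -
  define S where "S = {t. 0 \<le> t \<and> b t \<omega> = Lc}"
  have S: "S = {0..} \<inter> (\<lambda>t. b t \<omega>) -` {Lc}" by (auto simp: S_def)
  have cl: "closed S" unfolding S by (rule continuous_closed_preimage[OF bcont[OF \<omega>]]) auto
  have ne: "S \<noteq> {}" using hit by (auto simp: hit_def S_def)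
  have bb: "bdd_below S" by (rule bdd_belowI[of _ 0]) (auto simp: S_def)
  have tS: "tau \<omega> \<in> S" unfolding tau_def S_def[symmetric] by (rule closed_contains_Inf[OF ne bb cl])
  then show "b (tau \<omega>) \<omega> = Lc" by (simp add: S_def)
  have "tau \<omega> \<noteq> 0" using tS b0[OF \<omega>] Lpos by (auto simp: S_def)
  then show "0 < tau \<omega>" using tS by (auto simp: S_def)
  show "b r \<omega> \<noteq> Lc" if "0 \<le> r" "r < tau \<omega>" for r
  proof
    assume "b r \<omega> = Lc"
    then have "r \<in> S" using that by (simp add: S_def)
    then have "tau \<omega> \<le> r" unfolding tau_def S_def[symmetric] by (rule cInf_lower[OF _ bb])
    then show False using that by simp
  qed
qed

lemma region:
  assumes \<omega>: "\<omega> \<in> space M" and u: "0 \<le> u" and nh: "\<And>r. 0 \<le> r \<Longrightarrow> r < u \<Longrightarrow> b r \<omega> \<noteq> Lc"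
  shows "\<not> (Im (b u \<omega>) = 0 \<and> Re (b u \<omega>) > L)"
proof
  assume H: "Im (b u \<omega>) = 0 \<and> Re (b u \<omega>) > L"
  define phi where "phi = legf (\<lambda>x. x) (\<lambda>_. 0)"
  have cphi: "continuous_on (spider N) phi" unfolding phi_def
    by (rule legf_cont) (auto intro: continuous_intros)
  have cg: "continuous_on {0..u} (\<lambda>r. phi (b r \<omega>))"
    by (rule continuous_on_compose2[OF cphi continuous_on_subset[OF bcont[OF \<omega>]]]) (use bS[OF \<omega>] in auto)
  have g0: "phi (b 0 \<omega>) \<le> L" using b0[OF \<omega>] Lpos by (simp add: phi_def legf_def)
  have gu: "L \<le> phi (b u \<omega>)" using H Lpos by (simp add: phi_def legf_def)
  obtain r where r: "0 \<le> r" "r \<le> u" "phi (b r \<omega>) = L" using IVT'[OF g0 gu u cg] by blast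
  have br: "Im (b r \<omega>) = 0 \<and> 0 \<le> Re (b r \<omega>) \<and> Re (b r \<omega>) = L"
    using r(3) Lpos by (auto simp: phi_def legf_def split: if_splits)
  then have "b r \<omega> = Lc" by (simp add: complex_eq_iff)
  moreover have "r \<noteq> u" using br H by auto
  ultimately show False using nh[of r] r by simp
qed

definition "sig T \<omega> = (if hit \<omega> then min (tau \<omega>) T else T)"

definition "Dset t = {\<omega> \<in> space M. \<forall>r\<in>{0..t}. b r \<omega> \<noteq> Lc}"

lemma sig_bnd: "\<omega> \<in> space M \<Longrightarrow> T > 0 \<Longrightarrow> 0 \<le> sig T \<omega> \<and> sig T \<omega> \<le> T"
  using tau(1)[of \<omega>] by (auto simp: sig_def)

lemma before_sig: "\<omega> \<in> space M \<Longrightarrow> 0 \<le> r \<Longrightarrow> r < sig T \<omega> \<Longrightarrow> b r \<omega> \<noteq> Lc"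
  using tau(3)[of \<omega> r] by (auto simp: sig_def hit_def split: if_splits)

lemma D_iff:
  assumes \<omega>: "\<omega> \<in> space M" and t: "0 \<le> t" "t < T"
  shows "\<omega> \<in> Dset t \<longleftrightarrow> t < sig T \<omega>"
proof
  assume D: "\<omega> \<in> Dset t"
  show "t < sig T \<omega>"
  proof (cases "hit \<omega>")
    case True
    have "\<not> tau \<omega> \<le> t"
    proof
      assume "tau \<omega> \<le> t"
      then have "b (tau \<omega>) \<omega> \<noteq> Lc" using D tau(1)[OF \<omega> True] by (auto simp: Dset_def)
      then show False using tau(2)[OF \<omega> True] by simp
    qed
    then show ?thesis using True t by (simp add: sig_def)
  next
    case False then show ?thesis using t by (simp add: sig_def)
  qed
next
  assume "t < sig T \<omega>"
  then show "\<omega> \<in> Dset t" using \<omega> before_sig[of \<omega> _ T] by (auto simp: Dset_def)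
qed

lemma pde_path:
  assumes \<omega>: "\<omega> \<in> space M" and u: "0 \<le> u" "u \<le> sig T \<omega>"
  shows "h (b u \<omega>) / 2 = lam * f (b u \<omega>)"
proof (rule pde)
  show "\<not> (Im (b u \<omega>) = 0 \<and> Re (b u \<omega>) > L)"
  proof (rule region[OF \<omega> u(1)])
    fix r assume r: "0 \<le> r" "r < u"
    then have "r < sig T \<omega>" using u by linarith
    then show "b r \<omega> \<noteq> Lc" by (rule before_sig[OF \<omega> r(1)])
  qed
qed

end


context spBM begin

lemma hit_approx:
  assumes \<omega>: "\<omega> \<in> space M" and t: "0 \<le> t"
  shows "(\<exists>r\<in>{0..t}. b r \<omega> = Lc) \<longleftrightarrow>
    (\<forall>m::nat. \<exists>k j::nat. j \<le> k \<and> cmod (b (t * real j / real k) \<omega> - Lc) < 1 / (real m + 1))"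
proof
  assume "\<exists>r\<in>{0..t}. b r \<omega> = Lc"
  then obtain r where r: "0 \<le> r" "r \<le> t" "b r \<omega> = Lc" by auto
  show "\<forall>m::nat. \<exists>k j::nat. j \<le> k \<and> cmod (b (t * real j / real k) \<omega> - Lc) < 1 / (real m + 1)"
  proof
    fix m :: nat
    have em: "1 / (real m + 1) > 0" by simp
    obtain d where d: "d > 0" and dd: "\<And>x'. x' \<in> {0..} \<Longrightarrow> dist x' r < d \<Longrightarrow> dist (b x' \<omega>) (b r \<omega>) < 1 / (real m + 1)"
      using bcont[OF \<omega>] r(1) em unfolding continuous_on_iff by (metis atLeast_iff)
    define k where "k = nat \<lceil>t / d\<rceil> + 1"
    have k1: "k \<ge> 1" by (simp add: k_def)
    have tk: "t / real k < d"
    proof -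
      have "t / d < real k" unfolding k_def by linarith
      then have "t < real k * d" using d by (simp add: field_simps)
      then show ?thesis using k1 by (simp add: field_simps)
    qed
    define j where "j = nat \<lfloor>r * real k / t\<rfloor>"
    define r' where "r' = t * real j / real k"
    have jk: "j \<le> k"
    proof (cases "t = 0")
      case True then show ?thesis by (simp add: j_def)
    next
      case False
      then have "r * real k / t \<le> real k" using r t by (simp add: field_simps mult_right_mono)
      then have "\<lfloor>r * real k / t\<rfloor> \<le> int k" by (simp add: floor_le_iff)
      from nat_mono[OF this] show ?thesis by (simp add: j_def)
    qed
    have r'0: "0 \<le> r'" using t by (simp add: r'_def)
    have rr': "\<bar>r' - r\<bar> < d"
    proof (cases "t = 0")
      case True then show ?thesis using r d by (simp add: r'_def)
    next
      case False
      then have tp: "t > 0" using t by simp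
      have fl0: "\<lfloor>r * real k / t\<rfloor> \<ge> 0" using r tp by simp
      have rj: "real j = of_int \<lfloor>r * real k / t\<rfloor>" unfolding j_def using fl0 by simp
      have "real j \<le> r * real k / t" "r * real k / t < real j + 1"
        unfolding rj by (simp_all add: of_int_floor_le)
      then have "t * real j \<le> r * real k" "r * real k < t * real j + t" using tp
        by (simp_all add: field_simps)
      then have "r' \<le> r" "r < r' + t / real k" using k1 by (simp_all add: r'_def field_simps)
      then show ?thesis using tk by linarith
    qed
    have "dist (b r' \<omega>) (b r \<omega>) < 1 / (real m + 1)" using dd[of r'] r'0 rr' by (simp add: dist_real_def)
    then have "cmod (b r' \<omega> - Lc) < 1 / (real m + 1)" using r(3) by (simp add: dist_norm)
    then show "\<exists>k j::nat. j \<le> k \<and> cmod (b (t * real j / real k) \<omega> - Lc) < 1 / (real m + 1)"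
      using jk unfolding r'_def by blast
  qed
next
  assume A: "\<forall>m::nat. \<exists>k j::nat. j \<le> k \<and> cmod (b (t * real j / real k) \<omega> - Lc) < 1 / (real m + 1)"
  define phi where "phi = (\<lambda>r. cmod (b r \<omega> - Lc))"
  have cphi: "continuous_on {0..t} phi" unfolding phi_def
    by (intro continuous_intros continuous_on_subset[OF bcont[OF \<omega>]]) auto
  obtain r where r: "r \<in> {0..t}" and rmin: "\<And>y. y \<in> {0..t} \<Longrightarrow> phi r \<le> phi y"
    using continuous_attains_inf[OF compact_Icc _ cphi] t by auto
  have "phi r = 0"
  proof (rule ccontr)
    assume "phi r \<noteq> 0"
    then have "phi r > 0" by (simp add: phi_def)
    then obtain m where m: "inverse (real (Suc m)) < phi r" using reals_Archimedean by blast
    obtain k j :: nat where kj: "j \<le> k" "cmod (b (t * real j / real k) \<omega> - Lc) < 1 / (real m + 1)"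
      using A by blast
    have y: "t * real j / real k \<in> {0..t}"
    proof -
      have "t * real j / real k \<le> t"
      proof (cases "k = 0")
        case False
        have "t * real j \<le> t * real k" using kj(1) t by (intro mult_left_mono) auto
        then show ?thesis using False by (simp add: field_simps)
      qed (simp add: t)
      then show ?thesis using t by simp
    qed
    have "phi r \<le> phi (t * real j / real k)" by (rule rmin[OF y])
    also have "\<dots> < 1 / (real m + 1)" using kj(2) by (simp add: phi_def)
    also have "\<dots> = inverse (real (Suc m))" by (simp add: field_simps)
    finally show False using m by simp
  qed
  then show "\<exists>r\<in>{0..t}. b r \<omega> = Lc" using r by (auto simp: phi_def)
qed

lemma Dset_filt:
  assumes t: "0 \<le> t"
  shows "Dset t \<in> nat_filt M b t"
proof -
  interpret SA: sigma_algebra "space M" "nat_filt M b t"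
    unfolding nat_filt_def by (rule sigma_algebra_sigma_sets) auto
  define Oset where "Oset = (\<lambda>(m::nat) (kj::nat \<times> nat). {\<omega> \<in> space M.
      cmod (b (t * real (snd kj) / real (fst kj)) \<omega> - Lc) < 1 / (real m + 1)})"
  define K where "K = {kj :: nat \<times> nat. snd kj \<le> fst kj}"
  have Ogen: "Oset m kj \<in> nat_filt M b t" if "kj \<in> K" for m kj
  proof -
    define r where "r = t * real (snd kj) / real (fst kj)"
    have r: "0 \<le> r" "r \<le> t"
    proof -
      show "0 \<le> r" using t by (simp add: r_def)
      show "r \<le> t"
      proof (cases "fst kj = 0")
        case False
        have "t * real (snd kj) \<le> t * real (fst kj)" using that t by (intro mult_left_mono) (auto simp: K_def)
        then show ?thesis using False by (simp add: r_def field_simps)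
      qed (simp add: r_def t)
    qed
    have "Oset m kj = b r -` ball Lc (1 / (real m + 1)) \<inter> space M"
      by (auto simp: Oset_def r_def dist_norm norm_minus_commute)
    also have "\<dots> \<in> nat_filt M b t" unfolding nat_filt_def
    proof (rule sigma_sets.Basic)
      have bo: "ball Lc (1 / (real m + 1)) \<in> sets borel" by simp
      show "b r -` ball Lc (1 / (real m + 1)) \<inter> space M \<in> {b r -` B \<inter> space M |r B. 0 \<le> r \<and> r \<le> t \<and> B \<in> sets borel}"
        using r bo by blast
    qed
    finally show ?thesis .
  qed
  have cK: "countable K" by simp
  have eq: "{\<omega> \<in> space M. \<exists>r\<in>{0..t}. b r \<omega> = Lc} = (\<Inter>m. \<Union>kj\<in>K. Oset m kj)"
  proof (intro set_eqI)
    fix \<omega>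
    show "\<omega> \<in> {\<omega> \<in> space M. \<exists>r\<in>{0..t}. b r \<omega> = Lc} \<longleftrightarrow> \<omega> \<in> (\<Inter>m. \<Union>kj\<in>K. Oset m kj)"
    proof (cases "\<omega> \<in> space M")
      case True
      have "\<omega> \<in> (\<Inter>m. \<Union>kj\<in>K. Oset m kj) \<longleftrightarrow>
          (\<forall>m::nat. \<exists>k j::nat. j \<le> k \<and> cmod (b (t * real j / real k) \<omega> - Lc) < 1 / (real m + 1))"
        by (auto simp: Oset_def K_def True)
      then show ?thesis using hit_approx[OF True t] True by simp
    qed (auto simp: Oset_def)
  qed
  have "(\<Inter>m. \<Union>kj\<in>K. Oset m kj) \<in> nat_filt M b t"
    by (intro SA.countable_INT' SA.countable_UN') (auto intro: Ogen cK)
  then have "space M - (\<Inter>m. \<Union>kj\<in>K. Oset m kj) \<in> nat_filt M b t" by (intro SA.Diff SA.top)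
  moreover have "Dset t = space M - (\<Inter>m. \<Union>kj\<in>K. Oset m kj)" unfolding eq[symmetric] Dset_def by auto
  ultimately show ?thesis by simp
qed

end


context spBM begin

definition "pp \<omega> = (\<lambda>u. f (b u \<omega>))"
definition "qq \<omega> = (\<lambda>u. h (b u \<omega>) / 2)"

lemma cpp: "\<omega> \<in> space M \<Longrightarrow> continuous_on {0..T} (pp \<omega>)"
  unfolding pp_def
  by (rule continuous_on_compose2[OF f_cont continuous_on_subset[OF bcont]]) (auto intro: bS)

lemma cqq: "\<omega> \<in> space M \<Longrightarrow> continuous_on {0..T} (qq \<omega>)"
proof -
  assume \<omega>: "\<omega> \<in> space M"
  have "continuous_on {0..T} (\<lambda>u. h (b u \<omega>))"
    by (rule continuous_on_compose2[OF h_cont continuous_on_subset[OF bcont[OF \<omega>]]]) (auto intro: bS[OF \<omega>])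
  then show ?thesis unfolding qq_def by (intro continuous_intros) auto
qed

lemma bpp: "\<omega> \<in> space M \<Longrightarrow> u \<in> {0..T} \<Longrightarrow> \<bar>pp \<omega> u\<bar> \<le> Fb"
  unfolding pp_def by (rule Fb, rule bS) auto

lemma bqq: "\<omega> \<in> space M \<Longrightarrow> u \<in> {0..T} \<Longrightarrow> \<bar>qq \<omega> u\<bar> \<le> Qb"
  unfolding qq_def by (rule Qb, rule bS) auto

definition "Wf T \<omega> = exp (- lam * sig T \<omega>) * f (b (sig T \<omega>) \<omega>)"

definition "Rn T n \<omega> = f 0 + (\<Sum>j<n. exp (- lam * tt T n (Suc j)) *
    ((Xp (tt T n (Suc j)) \<omega> - Xp (tt T n j) \<omega>) * indicator (Dset (tt T n j)) \<omega>))"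

lemma tt_lt: "T > 0 \<Longrightarrow> j < n \<Longrightarrow> tt T n j < T"
  by (simp add: tt_def field_simps)

lemma Rn_path:
  assumes \<omega>: "\<omega> \<in> space M" and T: "T > 0"
  shows "Rn T n \<omega> = Ysum T lam (sig T \<omega>) (pp \<omega>) n - Phi T lam (sig T \<omega>) (pp \<omega>) (qq \<omega>) n"
proof -
  define sg where "sg = sig T \<omega>"
  have trmeq: "exp (- lam * tt T n (Suc j)) *
    ((Xp (tt T n (Suc j)) \<omega> - Xp (tt T n j) \<omega>) * indicator (Dset (tt T n j)) \<omega>)
    = (if tt T n j < sg then exp (- lam * tt T n (Suc j)) * pp \<omega> (tt T n (Suc j)) - exp (- lam * tt T n j) * pp \<omega> (tt T n j) else 0)
     - (if tt T n j < sg then trm lam (pp \<omega>) (qq \<omega>) (tt T n j) (tt T n (Suc j)) else 0)"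
    if j: "j < n" for j
  proof -
    have ind: "indicator (Dset (tt T n j)) \<omega> = (if tt T n j < sg then 1 else (0::real))"
      using D_iff[OF \<omega> tt_nonneg[of T n j] tt_lt[OF T j]] T by (simp add: sg_def indicator_def)
    have X: "Xp c \<omega> - Xp a \<omega> = pp \<omega> c - pp \<omega> a - (integral {0..c} (qq \<omega>) - integral {0..a} (qq \<omega>))" for a c
      by (simp add: Xp_def pp_def qq_def)
    show ?thesis
    proof (cases "tt T n j < sg")
      case True
      show ?thesis unfolding ind X trm_def if_P[OF True] mult_1_right by algebra
    next
      case False
      show ?thesis unfolding ind X trm_def if_not_P[OF False] by simp
    qed
  qed
  have "Rn T n \<omega> = pp \<omega> 0 + (\<Sum>j<n. (if tt T n j < sg then exp (- lam * tt T n (Suc j)) * pp \<omega> (tt T n (Suc j)) - exp (- lam * tt T n j) * pp \<omega> (tt T n j) else 0)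
     - (if tt T n j < sg then trm lam (pp \<omega>) (qq \<omega>) (tt T n j) (tt T n (Suc j)) else 0))"
    unfolding Rn_def using trmeq b0[OF \<omega>] by (simp add: pp_def)
  also have "\<dots> = Ysum T lam sg (pp \<omega>) n - Phi T lam sg (pp \<omega>) (qq \<omega>) n"
    unfolding Ysum_def Phi_def sum_subtractf by simp
  finally show ?thesis by (simp add: sg_def)
qed

lemma Rn_int:
  assumes T: "T > 0"
  shows "integrable M (Rn T n) \<and> integral\<^sup>L M (Rn T n) = Cc"
proof -
  interpret prob_space M by (rule PS)
  define g where "g = (\<lambda>j \<omega>. exp (- lam * tt T n (Suc j)) *
    ((Xp (tt T n (Suc j)) \<omega> - Xp (tt T n j) \<omega>) * indicator (Dset (tt T n j)) \<omega>))"
  have gi: "integrable M (g j)" for j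
  proof -
    have D: "Dset (tt T n j) \<in> sets M" using Dset_filt[OF tt_nonneg[of T n j]] filt_sets T by auto
    have "integrable M (\<lambda>\<omega>. (Xp (tt T n (Suc j)) \<omega> - Xp (tt T n j) \<omega>) * indicator (Dset (tt T n j)) \<omega>)"
      by (rule integrable_real_mult_indicator[OF D])
         (intro Bochner_Integration.integrable_diff Xint tt_nonneg, use T in auto)
    then show ?thesis unfolding g_def by (rule integrable_mult_right)
  qed
  have g0: "integral\<^sup>L M (g j) = 0" for j
  proof -
    have "(\<integral>\<omega>. (Xp (tt T n (Suc j)) \<omega> - Xp (tt T n j) \<omega>) * indicator (Dset (tt T n j)) \<omega> \<partial>M) = 0"
      by (rule Xmart[OF tt_nonneg tt_mono Dset_filt[OF tt_nonneg]]) (use T in auto)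
    then show ?thesis unfolding g_def by simp
  qed
  have R: "Rn T n = (\<lambda>\<omega>. f 0 + (\<Sum>j<n. g j \<omega>))" by (simp add: Rn_def[abs_def] g_def)
  have "integrable M (Rn T n)" unfolding R using gi by auto
  moreover have "integral\<^sup>L M (Rn T n) = f 0" unfolding R
    using gi g0 by (simp add: Bochner_Integration.integral_add Bochner_Integration.integral_sum prob_space)
  ultimately show ?thesis using f_0 by simp
qed

lemma W_lemma:
  assumes T: "T > 0"
  shows "Wf T \<in> borel_measurable M \<and> integral\<^sup>L M (Wf T) = Cc"
proof -
  interpret prob_space M by (rule PS)
  have lim: "(\<lambda>n. Rn T n \<omega>) \<longlonglongrightarrow> Wf T \<omega>" if \<omega>: "\<omega> \<in> space M" for \<omega>
  proof -
    have sb: "0 \<le> sig T \<omega>" "sig T \<omega> \<le> T" using sig_bnd[OF \<omega> T] by auto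
    have Y: "(\<lambda>n. Ysum T lam (sig T \<omega>) (pp \<omega>) n) \<longlonglongrightarrow> Wf T \<omega>"
      using Ysum_lim[OF T sb cpp[OF \<omega>], of lam] by (simp add: Wf_def pp_def)
    have P: "(\<lambda>n. Phi T lam (sig T \<omega>) (pp \<omega>) (qq \<omega>) n) \<longlonglongrightarrow> 0"
    proof (rule Phi_lim[OF T lam cpp[OF \<omega>] cqq[OF \<omega>] sb])
      show "qq \<omega> u = lam * pp \<omega> u" if "u \<in> {0..sig T \<omega>}" for u
        using pde_path[OF \<omega>, of u T] that by (simp add: qq_def pp_def)
    qed (use bpp[OF \<omega>] bqq[OF \<omega>] in auto)
    show ?thesis using tendsto_diff[OF Y P] Rn_path[OF \<omega> T] by simp
  qed
  have bnd: "\<bar>Rn T n \<omega>\<bar> \<le> Fb + T * (Qb + lam * Fb)" if \<omega>: "\<omega> \<in> space M" for \<omega> n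
  proof -
    have sb: "0 \<le> sig T \<omega>" "sig T \<omega> \<le> T" using sig_bnd[OF \<omega> T] by auto
    have "\<bar>Ysum T lam (sig T \<omega>) (pp \<omega>) n\<bar> \<le> Fb"
      by (rule Ysum_bound[OF T lam sb]) (use bpp[OF \<omega>] in auto)
    moreover have "\<bar>Phi T lam (sig T \<omega>) (pp \<omega>) (qq \<omega>) n\<bar> \<le> T * (Qb + lam * Fb)"
      by (rule Phi_bound[OF T lam cqq[OF \<omega>]]) (use bpp[OF \<omega>] bqq[OF \<omega>] in auto)
    ultimately show ?thesis using Rn_path[OF \<omega> T, of n] by linarith
  qed
  have Rm: "Rn T n \<in> borel_measurable M" for n using Rn_int[OF T] by auto
  have Wm: "Wf T \<in> borel_measurable M"
    by (rule borel_measurable_LIMSEQ_real[OF lim Rm])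
  have l1: "(\<lambda>n. integral\<^sup>L M (Rn T n)) \<longlonglongrightarrow> integral\<^sup>L M (Wf T)"
  proof (rule integral_dominated_convergence[OF Wm Rm, where w = "\<lambda>_. Fb + T * (Qb + lam * Fb)"])
    show "integrable M (\<lambda>_. Fb + T * (Qb + lam * Fb))" by simp
    show "AE x in M. (\<lambda>n. Rn T n x) \<longlonglongrightarrow> Wf T x" using lim by (intro AE_I2)
    show "AE x in M. norm (Rn T n x) \<le> Fb + T * (Qb + lam * Fb)" for n using bnd by (intro AE_I2) auto
  qed
  have l2: "(\<lambda>n. integral\<^sup>L M (Rn T n)) \<longlonglongrightarrow> Cc" using Rn_int[OF T] by simp
  have "integral\<^sup>L M (Wf T) = Cc" by (rule LIMSEQ_unique[OF l1 l2])
  with Wm show ?thesis by simp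
qed

lemma main: "hit_laplace M b lam L = Cc"
proof -
  interpret prob_space M by (rule PS)
  define Hf where "Hf = (\<lambda>\<omega>. if \<exists>t\<ge>0. b t \<omega> = complex_of_real L
      then exp (- lam * Inf {t. 0 \<le> t \<and> b t \<omega> = complex_of_real L}) else 0)"
  have HL: "hit_laplace M b lam L = integral\<^sup>L M Hf" unfolding hit_laplace_def Hf_def by simp
  define Wk where "Wk = (\<lambda>k. Wf (real (Suc k)))"
  have Wbnd: "\<bar>Wk k \<omega>\<bar> \<le> Fb" if \<omega>: "\<omega> \<in> space M" for k \<omega>
  proof -
    have sb: "0 \<le> sig (real (Suc k)) \<omega>" using sig_bnd[OF \<omega>, of "real (Suc k)"] by auto
    have fb: "\<bar>f (b (sig (real (Suc k)) \<omega>) \<omega>)\<bar> \<le> Fb" by (rule Fb, rule bS[OF \<omega> sb])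
    have e1: "\<bar>exp (- lam * sig (real (Suc k)) \<omega>)\<bar> \<le> 1" using sb lam by simp
    have "\<bar>Wk k \<omega>\<bar> \<le> 1 * Fb" unfolding Wk_def Wf_def abs_mult
      using mult_mono[OF e1 fb] by simp
    then show ?thesis by simp
  qed
  have lim: "(\<lambda>k. Wk k \<omega>) \<longlonglongrightarrow> Hf \<omega>" if \<omega>: "\<omega> \<in> space M" for \<omega>
  proof (cases "hit \<omega>")
    case True
    have ev: "\<forall>\<^sub>F k in sequentially. Wk k \<omega> = Hf \<omega>"
      unfolding eventually_sequentially
    proof (intro exI allI impI)
      fix k assume k: "nat \<lceil>tau \<omega>\<rceil> \<le> k"
      have "tau \<omega> \<le> real (Suc k)" using k real_nat_ceiling_ge[of "tau \<omega>"] by linarith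
      then have "sig (real (Suc k)) \<omega> = tau \<omega>" using True by (simp add: sig_def)
      then show "Wk k \<omega> = Hf \<omega>" using True tau(2)[OF \<omega> True] f_L
        by (simp add: Wk_def Wf_def Hf_def hit_def tau_def)
    qed
    show ?thesis by (rule tendsto_eventually[OF ev])
  next
    case False
    then have H0: "Hf \<omega> = 0" by (simp add: Hf_def hit_def)
    have "\<bar>Wk k \<omega>\<bar> \<le> Fb * (exp (- lam) * exp (- lam) ^ k)" for k
    proof -
      have s: "sig (real (Suc k)) \<omega> = real (Suc k)" using False by (simp add: sig_def)
      have e: "exp (- lam * real (Suc k)) = exp (- lam) * exp (- lam) ^ k"
        using exp_of_nat_mult[of "Suc k" "- lam"] by (simp add: mult.commute)
      have fb: "\<bar>f (b (real (Suc k)) \<omega>)\<bar> \<le> Fb" by (rule Fb, rule bS[OF \<omega>]) simp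
      have "\<bar>Wk k \<omega>\<bar> \<le> exp (- lam * real (Suc k)) * Fb" unfolding Wk_def Wf_def s abs_mult
        using fb by (simp add: mult_left_mono)
      then show ?thesis unfolding e by (simp add: mult.commute)
    qed
    then have ev: "\<forall>\<^sub>F k in sequentially. norm (Wk k \<omega>) \<le> Fb * (exp (- lam) * exp (- lam) ^ k)"
      by (intro always_eventually) simp
    have el: "norm (exp (- lam)) < 1" using lam by simp
    have "(\<lambda>k. Fb * (exp (- lam) * exp (- lam) ^ k)) \<longlonglongrightarrow> Fb * (exp (- lam) * 0)"
      by (intro tendsto_mult_left LIMSEQ_power_zero el)
    then have g0: "(\<lambda>k. Fb * (exp (- lam) * exp (- lam) ^ k)) \<longlonglongrightarrow> 0" by simp
    show ?thesis unfolding H0 by (rule Lim_null_comparison[OF ev g0])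
  qed
  have Wm: "Wk k \<in> borel_measurable M" for k using W_lemma[of "real (Suc k)"] by (simp add: Wk_def)
  have Hm: "Hf \<in> borel_measurable M" by (rule borel_measurable_LIMSEQ_real[OF lim Wm])
  have l1: "(\<lambda>k. integral\<^sup>L M (Wk k)) \<longlonglongrightarrow> integral\<^sup>L M Hf"
  proof (rule integral_dominated_convergence[OF Hm Wm, where w = "\<lambda>_. Fb"])
    show "integrable M (\<lambda>_. Fb)" by simp
    show "AE x in M. (\<lambda>n. Wk n x) \<longlonglongrightarrow> Hf x" using lim by (intro AE_I2)
    show "AE x in M. norm (Wk n x) \<le> Fb" for n using Wbnd by (intro AE_I2) auto
  qed
  have l2: "(\<lambda>k. integral\<^sup>L M (Wk k)) \<longlonglongrightarrow> Cc" using W_lemma by (simp add: Wk_def)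
  have "integral\<^sup>L M Hf = Cc" by (rule LIMSEQ_unique[OF l1 l2])
  then show ?thesis using HL by simp
qed

end

theorem theorem2p4:
  fixes N :: nat and M :: "'a measure" and b :: "real \<Rightarrow> 'a \<Rightarrow> complex"
    and lam L :: real
  assumes "N \<ge> 2" and "spider_BM N M b" and "lam > 0" and "L > 0"
  shows "(\<lambda>n. 2 / real N * (1 - 2 / real N) ^ n * exp (- real (2 * n + 1) * sqrt (2 * lam) * L))
           sums hit_laplace M b lam L"
proof -
  interpret spBM N lam L M b
    by unfold_locales (use assms in auto)
  show ?thesis using series main by simp
qed

end
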